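(* Let $d\geq1$ be an integer and, for real $n>d/2$ and $u\in[0,+\infty)$, let $$\mathscr C_{nd}(u):=(1+4u)^n\int_0^1ds\,\frac{s^{n-1}}{\sqrt{1-s}\,(1+us)^{2n-d/2}}.$$ Then, for fixed $d$ and $n\to+\infty$, $$\mathscr C_{nd}(1/2)=\sqrt\pi\,\frac{3^{d/2+1/2}}{2^{d/2}\sqrt n}\Big(\frac43\Big)^n\Big[1+O(\tfrac1n)\Big].$$ *)

theory Defs
  imports "HOL-Analysis.Analysis" "HOL-Library.Landau_Symbols"
begin

definition Cnd :: "real \<Rightarrow> nat \<Rightarrow> real \<Rightarrow> real" where
  "Cnd n d u = (1 + 4 * u) powr n *
     (interval_lebesgue_integral lborel 0 1
       (\<lambda>s. s powr (n - 1) / (sqrt (1 - s) * (1 + u * s) powr (2 * n - real d / 2))))"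

end

theory Submission
  imports Defs "HOL-Real_Asymp.Real_Asymp"
begin


lemma powr_diff_bound:
  fixes a b n :: real
  assumes b: "0 < b" "b \<le> a" and n: "n \<ge> 1"
  shows "a powr n - b powr n \<le> n * a powr (n-1) * (a - b)"
proof (cases "b = a")
  case True thus ?thesis by simp
next
  case False
  hence ba: "b < a" using b by simp
  have "((\<lambda>t. t powr n) has_real_derivative n * t powr (n-1)) (at t)" if "b \<le> t" "t \<le> a" for t
  proof -
    have "t > 0" using b that by auto
    thus "((\<lambda>t. t powr n) has_real_derivative n * t powr (n-1)) (at t)"
      by (auto intro!: derivative_eq_intros)
  qed
  from MVT2[of b a, OF ba this] obtain z where z: "b < z" "z < a"
    and eq: "a powr n - b powr n = (a - b) * (n * z powr (n-1))" by blast
  have "z powr (n-1) \<le> a powr (n-1)"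
    using z b n by (intro powr_mono2) auto
  hence "(a - b) * (n * z powr (n-1)) \<le> (a - b) * (n * a powr (n-1))"
    using ba n by (intro mult_left_mono) auto
  thus ?thesis using eq by (simp add: algebra_simps)
qed

lemma ypow_bounds:
  fixes x :: real and d :: nat
  assumes "0 \<le> x" "x \<le> 1"
  shows "(1 - x/3) powr (real d / 2) \<le> 1" "1 - real d * x / 3 \<le> (1 - x/3) powr (real d / 2)"
proof -
  let ?y = "1 - x/3"
  have y: "0 < ?y" "?y \<le> 1" using assms by auto
  show "?y powr (real d / 2) \<le> 1" using y by (intro powr_le1) auto
  have eq: "?y powr (real d / 2) = sqrt ?y ^ d"
  proof -
    have "?y powr (real d / 2) = (?y powr (1/2)) powr real d" by (simp add: powr_powr)
    also have "\<dots> = sqrt ?y ^ d" using y by (simp add: powr_half_sqrt powr_realpow)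
    finally show ?thesis .
  qed
  have "?y \<le> sqrt ?y" using y by (simp add: real_le_rsqrt sqrt_ge_absD power2_eq_square mult_le_cancel_left1)
  hence "?y ^ d \<le> sqrt ?y ^ d" using y by (intro power_mono) auto
  moreover have "1 + real d * (- x/3) \<le> (1 + (- x/3)) ^ d"
    using assms by (intro Bernoulli_inequality) auto
  ultimately show "1 - real d * x / 3 \<le> ?y powr (real d / 2)" using eq by simp
qed

lemma E_bounds:
  fixes x :: real
  assumes "0 < x" "x < 1"
  shows "(1-x)/(1-x/3)^2 \<le> 1 - x/3" "1 - x/3 - (1-x)/(1-x/3)^2 \<le> 3/4 * x^2"
proof -
  have "2/3 \<le> 1 - x/3" using assms by simp
  from power_mono[OF this, of 2] have y: "(1-x/3)^2 \<ge> 4/9" by (simp add: power2_eq_square)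
  have ypos: "(1-x/3)^2 > 0" using assms by simp
  have eq: "1 - x/3 - (1-x)/(1-x/3)^2 = (x^2 * (9 - x) / 27) / (1-x/3)^2"
    using ypos by (simp add: field_simps power2_eq_square power3_eq_cube)
  have "x^2 * (9 - x) / 27 \<ge> 0" using assms by simp
  thus "(1-x)/(1-x/3)^2 \<le> 1 - x/3" using eq ypos by (smt (verit) divide_nonneg_pos)
  have "(x^2 * (9 - x) / 27) / (1-x/3)^2 \<le> (x^2 * (9 - x) / 27) / (4/9)"
    using y assms by (intro divide_left_mono) auto
  also have "\<dots> \<le> 3/4 * x^2" using assms by (simp add: field_simps)
  finally show "1 - x/3 - (1-x)/(1-x/3)^2 \<le> 3/4 * x^2" using eq by simp
qed

lemma exp_neg_upper:
  fixes y :: real assumes "0 \<le> y"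
  shows "exp (-y) \<le> 1 - y + y^2/2"
proof -
  have 1: "1 + y + y^2/2 \<le> exp y" by (rule exp_lower_Taylor_quadratic[OF assms])
  have 2: "(1 - y + y^2/2) * (1 + y + y^2/2) \<ge> 1"
    by (simp add: algebra_simps power2_eq_square) (smt (verit) mult_nonneg_nonneg assms zero_le_square)
  have "y^2/2 \<ge> 0" by simp
  hence p: "1 + y + y^2/2 > 0" using assms by linarith
  have "exp (-y) = 1 / exp y" by (simp add: exp_minus field_simps)
  also have "\<dots> \<le> 1 / (1 + y + y^2/2)" using 1 p by (intro divide_left_mono) auto
  also have "\<dots> \<le> 1 - y + y^2/2" using 2 p by (simp add: field_simps)
  finally show ?thesis .
qed

lemma pointwise:
  fixes n x :: real and d :: nat
  assumes n: "n \<ge> 2" and x: "0 < x" "x < 1"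
  shows "\<bar>((1-x)/(1-x/3)^2) powr (n-1) * (1-x/3) powr (real d/2 - 2) / sqrt x - exp (-(n/3*x)) / sqrt x\<bar>
     \<le> 9/4 * (1 + real d/3) * sqrt x * exp (-((n-1)/3*x)) + n * (x * sqrt x) * exp (-((n-1)/3*x))"
proof -
  define y where "y = 1 - x/3"
  define E where "E = (1-x)/y^2"
  define a where "a = exp (-(x/3))"
  have y: "2/3 < y" "y \<le> 1" using x by (auto simp: y_def)
  have ypos: "y > 0" using y by simp
  have Epos: "E > 0" using x ypos by (simp add: E_def)
  have Ea: "E \<le> a" using E_bounds(1)[OF x] exp_ge_add_one_self[of "-(x/3)"]
    by (simp add: E_def y_def a_def)
  have Ea2: "a - E \<le> x^2"
  proof -
    have "a \<le> 1 - x/3 + (x/3)^2/2" unfolding a_def by (rule exp_neg_upper) (use x in auto)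
    moreover have "1 - x/3 - E \<le> 3/4 * x^2" using E_bounds(2)[OF x] by (simp add: E_def y_def)
    moreover have "(x/3)^2/2 \<le> x^2/4" by (simp add: power2_eq_square)
    ultimately show ?thesis by linarith
  qed
  have apow: "a powr r = exp (-(r/3*x))" for r
    by (simp add: a_def powr_def)
  have Epow: "E powr (n-1) \<le> exp (-((n-1)/3*x))"
    using powr_mono2[of "n-1" E a] Epos Ea n apow[of "n-1"] by simp
  have Epow0: "E powr (n-1) \<ge> 0" by simp
  have ypd: "\<bar>y powr (real d/2) - (1-x)\<bar> \<le> (1 + real d/3) * x"
    using ypow_bounds[of x d] x by (simp add: y_def abs_le_iff algebra_simps)
  have yeq: "y powr (real d/2 - 2) - E = (y powr (real d/2) - (1-x)) / y^2"
    using ypos by (simp add: powr_diff E_def diff_divide_distrib powr_numeral)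
  have "\<bar>y powr (real d/2 - 2) - E\<bar> \<le> (1 + real d/3) * x / y^2"
    unfolding yeq abs_divide using ypd ypos by (simp add: divide_right_mono)
  also have "\<dots> \<le> (1 + real d/3) * x / (4/9)"
  proof (rule divide_left_mono)
    have "(2/3::real)^2 \<le> y^2" using y by (intro power_mono) auto
    thus "4/9 \<le> y^2" by (simp add: power2_eq_square)
  qed (use x ypos in auto)
  finally have A0: "\<bar>y powr (real d/2 - 2) - E\<bar> \<le> 9/4 * (1 + real d/3) * x" by (simp add: field_simps)
  have A: "\<bar>E powr (n-1) * (y powr (real d/2 - 2) - E)\<bar> \<le> exp (-((n-1)/3*x)) * (9/4 * (1 + real d/3) * x)"
    unfolding abs_mult using A0 Epow by (intro mult_mono) auto
  have B0: "a powr n - E powr n \<le> n * a powr (n-1) * (a - E)"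
    by (rule powr_diff_bound) (use Epos Ea n in auto)
  have B1: "E powr n \<le> a powr n" using Epos Ea n by (intro powr_mono2) auto
  have B: "\<bar>E powr n - exp (-(n/3*x))\<bar> \<le> n * exp (-((n-1)/3*x)) * x^2"
  proof -
    have "\<bar>E powr n - exp (-(n/3*x))\<bar> = a powr n - E powr n" using B1 apow[of n] by simp
    also have "\<dots> \<le> n * a powr (n-1) * (a - E)" by (rule B0)
    also have "\<dots> \<le> n * a powr (n-1) * x^2" using Ea2 n by (intro mult_left_mono) auto
    finally show ?thesis using apow[of "n-1"] by simp
  qed
  have split: "E powr (n-1) * y powr (real d/2 - 2) - exp (-(n/3*x))
      = E powr (n-1) * (y powr (real d/2 - 2) - E) + (E powr n - exp (-(n/3*x)))"
  proof -
    have "E powr (n-1) * E = E powr n" using Epos by (simp add: powr_diff)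
    thus ?thesis by (simp add: algebra_simps)
  qed
  have tot: "\<bar>E powr (n-1) * y powr (real d/2 - 2) - exp (-(n/3*x))\<bar>
      \<le> exp (-((n-1)/3*x)) * (9/4 * (1 + real d/3) * x) + n * exp (-((n-1)/3*x)) * x^2"
    unfolding split using A B by linarith
  have sx: "sqrt x > 0" using x by simp
  have "\<bar>E powr (n-1) * y powr (real d/2 - 2) / sqrt x - exp (-(n/3*x)) / sqrt x\<bar>
      = \<bar>E powr (n-1) * y powr (real d/2 - 2) - exp (-(n/3*x))\<bar> / sqrt x"
    using sx by (simp add: diff_divide_distrib[symmetric] abs_divide)
  also have "\<dots> \<le> (exp (-((n-1)/3*x)) * (9/4 * (1 + real d/3) * x) + n * exp (-((n-1)/3*x)) * x^2) / sqrt x"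
    using tot sx by (intro divide_right_mono) auto
  also have "\<dots> = 9/4 * (1 + real d/3) * sqrt x * exp (-((n-1)/3*x)) + n * (x * sqrt x) * exp (-((n-1)/3*x))"
  proof -
    have alg: "(e*(c*(t*t)) + m*e*(t*t)^2)/t = c*t*e + m*((t*t)*t)*e" if "t > 0" for e c m t :: real
      using that by (simp add: field_simps power2_eq_square)
    have "x = sqrt x * sqrt x" using x by simp
    then show ?thesis using alg[OF sx, of "exp (-((n-1)/3*x))" "9/4 * (1 + real d/3)" n] by metis
  qed
  finally show ?thesis by (simp add: E_def y_def)
qed

lemma gamma_scaled:
  fixes a c :: real
  assumes a: "a > 0" and c: "c > 0"
  shows "((\<lambda>x. x powr (a-1) * exp (-(c*x))) has_integral (Gamma a / c powr a)) {0<..}"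
proof -
  let ?f = "\<lambda>t::real. t powr (a - 1) / exp t"
  have "(?f has_integral Gamma a) {0..}" by (rule Gamma_integral_real[OF a])
  hence "((\<lambda>t. if t \<in> {0<..} then ?f t else 0) has_integral Gamma a) {0..}"
    by (rule has_integral_spike [of "{0}", rotated 2]) auto
  hence f1: "(?f has_integral Gamma a) {0<..}"
    by (subst (asm) has_integral_restrict) auto
  have fabs: "?f absolutely_integrable_on {0<..}"
    using f1 by (intro nonnegative_absolutely_integrable_1) auto
  have img: "(\<lambda>x. c * x) ` {0<..} = ({0<..}::real set)"
  proof
    show "{0<..} \<subseteq> (\<lambda>x. c * x) ` {0<..}"
    proof
      fix y :: real assume "y \<in> {0<..}"
      hence "y = c * (y / c)" "y / c \<in> {0<..}" using c by auto
      thus "y \<in> (\<lambda>x. c * x) ` {0<..}" by blast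
    qed
  qed (use c in auto)
  have "(\<lambda>x. \<bar>c\<bar> * ?f (c * x)) absolutely_integrable_on {0<..} \<and>
           integral {0<..} (\<lambda>x. \<bar>c\<bar> * ?f (c * x)) = Gamma a"
    apply (subst has_absolute_integral_change_of_variables_1'[where g="\<lambda>x. c * x"])
    using fabs f1 img by (auto intro!: derivative_eq_intros inj_onI simp: c)
  hence h: "((\<lambda>x. \<bar>c\<bar> * ?f (c * x)) has_integral Gamma a) {0<..}"
    using set_lebesgue_integral_eq_integral(1) has_integral_integral by (metis absolutely_integrable_on_def) 
  have "((\<lambda>x. (1 / c powr a) * (\<bar>c\<bar> * ?f (c * x))) has_integral (1 / c powr a) * Gamma a) {0<..}"
    by (rule has_integral_mult_right[OF h])
  moreover have "(1 / c powr a) * (\<bar>c\<bar> * ?f (c * x)) = x powr (a-1) * exp (-(c*x))" if "x \<in> {0<..}" for x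
  proof -
    have "c * (c*x) powr (a-1) = c powr a * x powr (a-1)"
      using that c by (simp add: powr_mult powr_diff)
    thus ?thesis using c by (simp add: exp_minus field_simps)
  qed
  ultimately show ?thesis
    by (subst has_integral_cong[symmetric]) (auto simp: divide_simps)
qed


lemma G1: assumes c: "c > 0"
  shows "((\<lambda>x. exp (-(c*x)) / sqrt x) has_integral Gamma (1/2) / c powr (1/2)) {0<..}"
proof -
  have "((\<lambda>x. x powr (1/2-1) * exp (-(c*x))) has_integral Gamma (1/2) / c powr (1/2)) {0<..}"
    by (rule gamma_scaled) (use c in auto)
  moreover have "x powr (1/2-1) * exp (-(c*x)) = exp (-(c*x)) / sqrt x" if "x \<in> {0<..}" for x::real
  proof -
    have "x powr (1/2-1) = x powr (-(1/2))" by simp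
    also have "\<dots> = 1 / sqrt x" using that by (simp add: powr_minus_divide powr_half_sqrt)
    finally show ?thesis by simp
  qed
  ultimately show ?thesis using has_integral_cong[of "{0<..}"] by (metis (no_types, lifting))
qed

lemma G3: assumes c: "c > 0"
  shows "((\<lambda>x. sqrt x * exp (-(c*x))) has_integral Gamma (3/2) / c powr (3/2)) {0<..}"
proof -
  have "((\<lambda>x. x powr (3/2-1) * exp (-(c*x))) has_integral Gamma (3/2) / c powr (3/2)) {0<..}"
    by (rule gamma_scaled) (use c in auto)
  moreover have "x powr (3/2-1) * exp (-(c*x)) = sqrt x * exp (-(c*x))" if "x \<in> {0<..}" for x::real
  proof -
    have "x powr (3/2-1) = x powr (1/2)" by simp
    also have "\<dots> = sqrt x" using that by (simp add: powr_half_sqrt)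
    finally show ?thesis by simp
  qed
  ultimately show ?thesis using has_integral_cong[of "{0<..}"] by (metis (no_types, lifting))
qed

lemma G5: assumes c: "c > 0"
  shows "((\<lambda>x. (x * sqrt x) * exp (-(c*x))) has_integral Gamma (5/2) / c powr (5/2)) {0<..}"
proof -
  have "((\<lambda>x. x powr (5/2-1) * exp (-(c*x))) has_integral Gamma (5/2) / c powr (5/2)) {0<..}"
    by (rule gamma_scaled) (use c in auto)
  moreover have "x powr (5/2-1) * exp (-(c*x)) = (x * sqrt x) * exp (-(c*x))" if "x \<in> {0<..}" for x::real
  proof -
    have "x powr (5/2-1) = x powr (1 + 1/2)" by simp
    also have "\<dots> = x powr 1 * x powr (1/2)" by (rule powr_add)
    also have "\<dots> = x * sqrt x" using that by (simp add: powr_half_sqrt)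
    finally show ?thesis by simp
  qed
  ultimately show ?thesis using has_integral_cong[of "{0<..}"] by (metis (no_types, lifting))
qed

lemma F_refl:
  fixes n x :: real and d :: nat
  assumes x: "0 < x" "x < 1"
  shows "(1-x) powr (n - 1) / (sqrt (1 - (1-x)) * (1 + 1/2 * (1-x)) powr (2 * n - real d / 2))
       = (3/2) powr (real d/2 - 2*n) * (((1-x)/(1-x/3)^2) powr (n-1) * (1-x/3) powr (real d/2 - 2) / sqrt x)"
proof -
  define y where "y = 1 - x/3"
  define E where "E = (1-x)/y^2"
  have ypos: "y > 0" using x by (simp add: y_def)
  have Epos: "E > 0" using x ypos by (simp add: E_def)
  have e1: "1 - x = E * y powr 2" using ypos by (simp add: E_def powr_numeral)
  have e2: "(1-x) powr (n-1) = E powr (n-1) * y powr (2*n-2)"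
  proof -
    have "(E * y powr 2) powr (n-1) = E powr (n-1) * (y powr 2) powr (n-1)"
      using Epos ypos by (simp add: powr_mult)
    also have "(y powr 2) powr (n-1) = y powr (2*n-2)" by (simp add: powr_powr algebra_simps)
    finally show ?thesis unfolding e1 .
  qed
  have e3: "(1 + 1/2 * (1-x)) powr (2 * n - real d / 2) = (3/2) powr (2 * n - real d / 2) * y powr (2 * n - real d / 2)"
  proof -
    have "1 + 1/2 * (1-x) = 3/2 * y" by (simp add: y_def)
    hence "(1 + 1/2 * (1-x)) powr (2 * n - real d / 2) = (3/2 * y) powr (2 * n - real d / 2)" by (rule arg_cong)
    also have "\<dots> = (3/2) powr (2 * n - real d / 2) * y powr (2 * n - real d / 2)"
      by (rule powr_mult; use ypos in auto)
    finally show ?thesis .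
  qed
  have e4: "y powr (real d/2 - 2) = y powr (2*n-2) / y powr (2 * n - real d / 2)"
    using ypos by (simp add: powr_diff[symmetric])
  have e5: "(3/2::real) powr (real d/2 - 2*n) = 1 / (3/2) powr (2 * n - real d / 2)"
    by (simp add: powr_minus_divide[symmetric])
  show ?thesis
    unfolding e2 e3 e4 e5 E_def[symmetric] y_def[symmetric] by simp
qed

lemma key:
  fixes n :: real and d :: nat
  assumes n: "n \<ge> 2"
  defines "F \<equiv> (\<lambda>s. s powr (n - 1) / (sqrt (1 - s) * (1 + 1/2 * s) powr (2 * n - real d / 2)))"
  shows "set_integrable lborel {0<..<1} F \<and>
    \<bar>integral {0<..<1} F / (3/2) powr (real d/2 - 2*n) - Gamma (1/2) / (n/3) powr (1/2)\<bar>
      \<le> 9/4 * (1 + real d/3) * (Gamma (3/2) / ((n-1)/3) powr (3/2)) + n * (Gamma (5/2) / ((n-1)/3) powr (5/2))"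
proof -
  define m where "m = (n-1)/3"
  define C1 where "C1 = 9/4 * (1 + real d/3)"
  define h where "h = (\<lambda>x::real. ((1-x)/(1-x/3)^2) powr (n-1) * (1-x/3) powr (real d/2 - 2) / sqrt x)"
  define q where "q = (\<lambda>x::real. if x < 1 then h x else 0)"
  define g where "g = (\<lambda>x::real. exp (-(n/3*x)) / sqrt x)"
  define K where "K = (\<lambda>x::real. C1 * (sqrt x * exp (-(m*x))) + n * ((x * sqrt x) * exp (-(m*x))))"
  define A where "A = (3/2::real) powr (real d/2 - 2*n)"
  have m: "m > 0" using n by (simp add: m_def)
  have gI: "(g has_integral Gamma (1/2) / (n/3) powr (1/2)) {0<..}"
    unfolding g_def using G1[of "n/3"] n by simp
  have KI: "(K has_integral C1 * (Gamma (3/2) / m powr (3/2)) + n * (Gamma (5/2) / m powr (5/2))) {0<..}"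
    unfolding K_def by (intro has_integral_add has_integral_mult_right G3 G5 m)
  have bound: "norm (q x - g x) \<le> K x" if "x \<in> {0<..}" for x
  proof (cases "x < 1")
    case True
    thus ?thesis using pointwise[OF n, of x d] that
      by (simp add: q_def h_def g_def K_def C1_def m_def)
  next
    case False
    hence x1: "x \<ge> 1" by simp
    have "norm (q x - g x) = exp (-(n/3*x)) / sqrt x" using False by (simp add: q_def g_def)
    also have "\<dots> \<le> exp (-(n/3*x))" using x1 by (simp add: divide_le_eq)
    also have "\<dots> \<le> exp (-(m*x))" using x1 by (simp add: m_def field_simps)
    also have "\<dots> \<le> n * ((x * sqrt x) * exp (-(m*x)))"
    proof -
      have "1 \<le> x * sqrt x" using x1 by (metis mult_mono' real_sqrt_ge_one zero_le_one mult_1)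
      hence "1 \<le> n * (x * sqrt x)" using n by (metis mult_mono' mult_1 one_le_numeral order_trans zero_le_one)
      thus ?thesis using mult_right_mono[of 1 "n * (x * sqrt x)" "exp (-(m*x))"] by (simp add: mult.assoc)
    qed
    also have "\<dots> \<le> K x" using that by (simp add: K_def C1_def)
    finally show ?thesis .
  qed
  have meas: "(\<lambda>x. q x - g x) \<in> borel_measurable (lebesgue_on {0<..})"
    unfolding q_def g_def h_def by (rule measurable_restrict_space1, rule measurable_completion) measurable
  have qg_abs: "(\<lambda>x. q x - g x) absolutely_integrable_on {0<..}"
    by (rule measurable_bounded_by_integrable_imp_absolutely_integrable[OF meas _ _ bound])
       (use KI in auto)
  have qg_int: "(\<lambda>x. q x - g x) integrable_on {0<..}"
    using qg_abs absolutely_integrable_on_def by blast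
  have normb: "norm (integral {0<..} (\<lambda>x. q x - g x)) \<le> integral {0<..} K"
    by (rule integral_norm_bound_integral[OF qg_int _ bound]) (use KI in auto)
  have q_int: "q integrable_on {0<..}"
  proof -
    have "(\<lambda>x. (q x - g x) + g x) integrable_on {0<..}"
      by (intro integrable_add qg_int) (use gI in auto)
    thus ?thesis by simp
  qed
  have int_eq: "integral {0<..} (\<lambda>x. q x - g x) = integral {0<..} q - integral {0<..} g"
    by (rule integral_diff[OF q_int]) (use gI in auto)
  define Q where "Q = integral {0<..} q"
  have qhas: "(q has_integral Q) {0<..}" using q_int by (simp add: Q_def has_integral_integral)
  have h_has: "(h has_integral Q) {0<..<1}"
  proof -
    have "((\<lambda>x. if x \<in> {0<..<1} then h x else 0) has_integral Q) {0<..}"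
      using qhas by (rule has_integral_eq[rotated]) (auto simp: q_def)
    thus ?thesis by (subst (asm) has_integral_restrict) auto
  qed
  have h_nonneg: "h x \<ge> 0" if "x \<in> {0<..<1}" for x
    using that unfolding h_def by (intro divide_nonneg_nonneg mult_nonneg_nonneg) auto
  have h_abs: "h absolutely_integrable_on {0<..<1}"
    using h_has h_nonneg by (intro nonnegative_absolutely_integrable_1) auto
  have Ah_abs: "(\<lambda>x. A * h x) absolutely_integrable_on {0<..<1}"
    using absolutely_integrable_scaleR_left[OF h_abs, of A] by simp
  have Ah_int: "integral {0<..<1} (\<lambda>x. A * h x) = A * Q"
    using h_has by (simp add: has_integral_iff)
  have img: "(\<lambda>x. 1 - x) ` {0<..<1} = ({0<..<1} :: real set)"
  proof
    show "{0<..<1} \<subseteq> (\<lambda>x. 1 - x) ` {0<..<1::real}"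
    proof
      fix y :: real assume "y \<in> {0<..<1}"
      hence "y = 1 - (1 - y)" "1 - y \<in> {0<..<1}" by auto
      thus "y \<in> (\<lambda>x. 1 - x) ` {0<..<1}" by blast
    qed
  qed auto
  have Fid: "\<bar>-1\<bar> * F (1 - x) = A * h x" if "x \<in> {0<..<1}" for x
    using F_refl[of x n d] that by (simp add: F_def A_def h_def)
  have cv: "(\<lambda>x. \<bar>-1\<bar> * F (1 - x)) absolutely_integrable_on {0<..<1} \<and>
           integral {0<..<1} (\<lambda>x. \<bar>-1\<bar> * F (1 - x)) = A * Q"
  proof
    show "(\<lambda>x. \<bar>-1\<bar> * F (1 - x)) absolutely_integrable_on {0<..<1}"
      by (rule absolutely_integrable_spike[OF Ah_abs, of "{}"]) (use Fid in auto)
    show "integral {0<..<1} (\<lambda>x. \<bar>-1\<bar> * F (1 - x)) = A * Q"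
      using Ah_int Fid by (metis (no_types, lifting) integral_cong)
  qed
  have F_abs: "F absolutely_integrable_on {0<..<1} \<and> integral {0<..<1} F = A * Q"
  proof -
    have der: "((\<lambda>x. 1 - x) has_field_derivative -1) (at x within {0<..<1})" for x :: real
      by (auto intro!: derivative_eq_intros)
    have inj: "inj_on (\<lambda>x::real. 1 - x) {0<..<1}" by (auto intro: inj_onI)
    show ?thesis
      using has_absolute_integral_change_of_variables_1'[of "{0<..<1}" "\<lambda>x. 1 - x" "\<lambda>_. -1" F "A*Q", OF _ der inj] cv img
      by simp
  qed
  have Fset: "set_integrable lborel {0<..<1} F"
  proof -
    have "integrable lebesgue (\<lambda>x. indicator {0<..<1} x *\<^sub>R F x)"
      using F_abs by (simp add: set_integrable_def)
    moreover have "(\<lambda>x. indicator {0<..<1} x *\<^sub>R F x) \<in> borel_measurable lborel"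
      unfolding F_def by measurable
    ultimately show ?thesis unfolding set_integrable_def using integrable_completion by blast
  qed
  have Apos: "A > 0" by (simp add: A_def)
  have "\<bar>integral {0<..<1} F / A - Gamma (1/2) / (n/3) powr (1/2)\<bar> = norm (integral {0<..} (\<lambda>x. q x - g x))"
    using F_abs Apos int_eq gI by (simp add: Q_def has_integral_iff)
  also have "\<dots> \<le> integral {0<..} K" by (rule normb)
  also have "\<dots> = C1 * (Gamma (3/2) / m powr (3/2)) + n * (Gamma (5/2) / m powr (5/2))"
    using KI by (simp add: has_integral_iff)
  finally show ?thesis using Fset by (simp add: A_def C1_def m_def)
qed


lemma L1: "(\<lambda>n::real. (n/3) powr (1/2) / ((n-1)/3) powr (3/2)) \<in> O[at_top](\<lambda>n. 1/n)"
  by real_asymp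
lemma L2: "(\<lambda>n::real. n * (n/3) powr (1/2) / ((n-1)/3) powr (5/2)) \<in> O[at_top](\<lambda>n. 1/n)"
  by real_asymp
lemma cm: "f \<in> O[F](g) \<Longrightarrow> (\<lambda>x. (c::real) * f x) \<in> O[F](g)"
  by (cases "c = 0") simp_all
lemma L3: "(\<lambda>n::real. c1 * ((n/3) powr (1/2) / ((n-1)/3) powr (3/2)) + c2 * (n * (n/3) powr (1/2) / ((n-1)/3) powr (5/2))) \<in> O[at_top](\<lambda>n. 1/n)"
  by (intro sum_in_bigo cm L1 L2)
lemma T_eq:
  fixes n :: real and d :: nat assumes n: "n > 0"
  shows "sqrt pi * 3 powr (real d / 2 + 1/2) / (2 powr (real d / 2) * sqrt n) * (4/3) powr n
     = 3 powr n * (3/2) powr (real d/2 - 2*n) * (Gamma (1/2) / (n/3) powr (1/2))"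
proof -
  have a: "(3/2::real) powr (real d/2 - 2*n) = (3/2) powr (real d/2) / (3/2) powr (2*n)" by (rule powr_diff)
  have b: "(3/2::real) powr (2*n) = (3 powr n * 3 powr n) / (2 powr n * 2 powr n)"
  proof -
    have "(3/2::real) powr (2*n) = (3/2) powr (n + n)" by simp
    also have "\<dots> = (3/2) powr n * (3/2) powr n" by (rule powr_add)
    finally show ?thesis by (simp add: powr_divide)
  qed
  have c: "(4/3::real) powr n = (2 powr n * 2 powr n) / 3 powr n"
  proof -
    have "(4/3::real) powr n = 4 powr n / 3 powr n" by (simp add: powr_divide)
    also have "(4::real) powr n = (2 * 2) powr n" by simp
    also have "\<dots> = 2 powr n * 2 powr n" by (rule powr_mult; simp)
    finally show ?thesis .
  qed
  have d: "(3/2::real) powr (real d/2) = 3 powr (real d/2) / 2 powr (real d/2)" by (simp add: powr_divide)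
  have e: "(n/3) powr (1/2) = sqrt n / sqrt 3" using n by (simp add: powr_half_sqrt real_sqrt_divide)
  have f: "(3::real) powr (real d / 2 + 1/2) = 3 powr (real d/2) * sqrt 3" by (simp add: powr_add powr_half_sqrt)
  have pos: "(3::real) powr n > 0" "(2::real) powr n > 0" "sqrt n > 0" "(2::real) powr (real d/2) > 0" using n by auto
  show ?thesis unfolding a b c d e f Gamma_one_half_real using pos by (simp add: field_simps)
qed

theorem lemma4p5:
  fixes d :: nat
  assumes "d \<ge> 1"
  shows "(\<lambda>n::real. Cnd n d (1/2) /
            (sqrt pi * 3 powr (real d / 2 + 1/2) / (2 powr (real d / 2) * sqrt n) * (4/3) powr n) - 1)
         \<in> O[at_top](\<lambda>n. 1 / n)"
proof -
  define T where "T n = sqrt pi * 3 powr (real d / 2 + 1/2) / (2 powr (real d / 2) * sqrt n) * (4/3) powr n" for n :: real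
  define G where "G n = Gamma (1/2) / (n/3) powr (1/2)" for n :: real
  define Err where "Err n = 9/4 * (1 + real d/3) * (Gamma (3/2) / ((n-1)/3) powr (3/2)) + n * (Gamma (5/2) / ((n-1)/3) powr (5/2))" for n :: real
  define c1 where "c1 = 9/4 * (1 + real d/3) * Gamma (3/2) / Gamma (1/2)"
  define c2 where "c2 = Gamma (5/2::real) / Gamma (1/2)"
  define L where "L n = c1 * ((n/3) powr (1/2) / ((n-1)/3) powr (3/2)) + c2 * (n * (n/3) powr (1/2) / ((n-1)/3) powr (5/2))" for n :: real
  have step: "\<bar>Cnd n d (1/2) / T n - 1\<bar> \<le> L n" if n: "n \<ge> 2" for n
  proof -
    define F where "F = (\<lambda>s. s powr (n - 1) / (sqrt (1 - s) * (1 + 1/2 * s) powr (2 * n - real d / 2)))"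
    define A where "A = (3/2::real) powr (real d/2 - 2*n)"
    have K: "set_integrable lborel {0<..<1} F" "\<bar>integral {0<..<1} F / A - G n\<bar> \<le> Err n"
      using key[OF n, of d] by (simp_all add: F_def A_def G_def Err_def)
    have ei: "einterval 0 1 = {0<..<1::real}" by (auto simp: einterval_def)
    have "interval_lebesgue_integral lborel 0 1 F = integral (einterval 0 1) F"
      by (rule interval_integral_eq_integral') (use K ei in auto)
    hence Cnd_eq: "Cnd n d (1/2) = 3 powr n * integral {0<..<1} F"
      unfolding Cnd_def F_def[symmetric] ei by simp
    have Apos: "A > 0" by (simp add: A_def)
    have Gpos: "G n > 0" using n by (simp add: G_def Gamma_one_half_real)
    have T_eq': "T n = 3 powr n * A * G n"
      unfolding T_def A_def G_def by (rule T_eq) (use n in auto)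
    have "Cnd n d (1/2) / T n - 1 = (integral {0<..<1} F / A - G n) / G n"
      unfolding Cnd_eq T_eq' using Apos Gpos by (simp add: field_simps)
    hence "\<bar>Cnd n d (1/2) / T n - 1\<bar> \<le> Err n / G n"
      using K(2) Gpos by (simp add: abs_divide divide_right_mono)
    also have "Err n / G n = L n"
    proof -
      have g: "Gamma (1/2::real) > 0" by (simp add: Gamma_one_half_real)
      have p: "(n/3) powr (1/2) > 0" using n by simp
      have p2: "((n-1)/3) powr (3/2) > 0" "((n-1)/3) powr (5/2) > 0" using n by simp_all
      have alg: "(k*(b/Q3) + m*(c/Q5)) / (a/P) = (k*b/a) * (P/Q3) + (c/a)*(m*P/Q5)"
        if "a > 0" "P > 0" "Q3 > 0" "Q5 > 0" for k b c m a P Q3 Q5 :: real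
        using that by (simp add: field_simps)
      show ?thesis unfolding Err_def G_def L_def c1_def c2_def
        by (rule alg[OF g p p2])
    qed
    finally show ?thesis .
  qed
  have ev: "eventually (\<lambda>n. norm (Cnd n d (1/2) / T n - 1) \<le> 1 * norm (L n)) at_top"
    using eventually_ge_at_top[of "2::real"]
  proof eventually_elim
    case (elim n)
    thus ?case using step[OF elim] by simp
  qed
  have "(\<lambda>n. Cnd n d (1/2) / T n - 1) \<in> O[at_top](L)"
    using ev by (intro bigoI)
  moreover have "L \<in> O[at_top](\<lambda>n. 1/n)"
    unfolding L_def by (rule L3)
  ultimately show ?thesis unfolding T_def by (rule landau_o.big_trans)
qed

end
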